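(* Let $F$ be a factbase and $\mathcal R$ a set of existential rules. For each terminating $\mathbf{O}$-chase derivation (resp. $\mathbf{SO}$-chase derivation) from $F$ and $\mathcal R$, there exists a breadth-first terminating $\mathbf{O}$-chase derivation (resp. $\mathbf{SO}$-chase derivation) from $F$ and $\mathcal R$ of smaller or equal depth.
   Context: First-order setting with constants and variables, no function symbols; a factbase is a set of atoms; a homomorphism from $A$ to $B$ is a substitution $\pi$ with $\pi(A)\subseteq B$. An existential rule $R=(B,H)$ is $\forall\bar x\forall\bar y(B(\bar x,\bar y)\to\exists\bar z\,H(\bar x,\bar z))$; its frontier is $\bar x$. A trigger $(R,\pi)$ on $F$ has $\pi:B\to F$ a homomorphism; $\pi^s$ maps each existential variable $z$ to a fresh variable $z_{(R,\pi)}$; $F\cup\pi^s(H)$ is the immediate derivation. A derivation from $F$ and $\mathcal R$ is a (possibly infinite) sequence $D_0=(\emptyset,\emptyset,F)$, $D_i=(R_i,\pi_i,F_i)$, $F_i$ the immediate derivation from $F_{i-1}$ through $(R_i,\pi_i)$, triggers pairwise distinct. For a derivation with last factbase $F_n$, a trigger $(R,\pi)$ is $\mathbf{O}$-applicable if $\pi:B\to F_n$ is a homomorphism, and $\mathbf{SO}$-applicable if moreover no trigger $(R,\pi')$ already in the derivation has $\pi'$ equal to $\pi$ on the frontier of $R$. An $\mathbf{O}$-chase derivation is any derivation; an $\mathbf{SO}$-chase derivation is one where each trigger is $\mathbf{SO}$-applicable on its prefix. Rank: atoms of $F$ have rank 0; another atom $A$ has rank $1+\max_{A'\in\pi(B)}\mathrm{rank}(A')$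 for the first trigger $(R,\pi)$ with $A\in\pi^s(H)$; a trigger has rank $1+\max_{A'\in\pi(B)}\mathrm{rank}(A')$. Depth of a finite derivation: maximal rank of its atoms. A derivation is $\mathrm{X}$-breadth-first if (1) its triggers appear in non-decreasing rank, and (2) for each rank $k$ of a trigger, letting $D_i$ be the last element whose trigger has rank $k$, every trigger $\mathrm{X}$-applicable on $D_1,\dots,D_i$ has rank $k+1$. "Breadth-first $\mathrm{X}$-chase derivation" means $\mathrm{X}$-breadth-first $\mathrm{X}$-chase derivation. An $\mathrm{X}$-chase derivation is exhaustive if any trigger $\mathrm{X}$-applicable on $D_1,\dots,D_i$ is either applied at some later $D_k$ ($k\ge i$) or ceases to be $\mathrm{X}$-applicable on some $D_1,\dots,D_k$; terminating means exhaustive and finite. *)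

theory Defs
  imports Main
begin

datatype ('c,'v) rterm = RC 'c | RV 'v

type_synonym ('p,'c,'v) ratom = "'p \<times> ('c,'v) rterm list"

(* an existential rule (B,H): body and head *)
type_synonym ('p,'c,'v) rule = "('p,'c,'v) ratom set \<times> ('p,'c,'v) ratom set"

(* Terms of derived factbases: constants, original variables, and the fresh
   variables z_(R,pi) created by triggers (Null R z pi).  The substitution pi
   of a trigger is a partial map whose domain is the set of body variables. *)
datatype ('p,'c,'v) trm =
    Cst 'c
  | Var 'v
  | Null "('p,'c,'v) rule" 'v "'v \<Rightarrow> ('p,'c,'v) trm option"

type_synonym ('p,'c,'v) atom = "'p \<times> ('p,'c,'v) trm list"

type_synonym ('p,'c,'v) trigger =
  "('p,'c,'v) rule \<times> ('v \<Rightarrow> ('p,'c,'v) trm option)"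

datatype chase_variant = O | SO

definition rvars :: "('p,'c,'v) ratom set \<Rightarrow> 'v set" where
  "rvars A = {v. \<exists>a\<in>A. RV v \<in> set (snd a)}"

definition existential_rule :: "('p,'c,'v) rule \<Rightarrow> bool" where
  "existential_rule R \<longleftrightarrow> finite (fst R) \<and> finite (snd R)"

definition frontier :: "('p,'c,'v) rule \<Rightarrow> 'v set" where
  "frontier R = rvars (fst R) \<inter> rvars (snd R)"

fun emb_term :: "('c,'v) rterm \<Rightarrow> ('p,'c,'v) trm" where
  "emb_term (RC c) = Cst c"
| "emb_term (RV v) = Var v"

definition emb_atom :: "('p,'c,'v) ratom \<Rightarrow> ('p,'c,'v) atom" where
  "emb_atom a = (fst a, map emb_term (snd a))"

fun app_term :: "('v \<Rightarrow> ('p,'c,'v) trm) \<Rightarrow> ('c,'v) rterm \<Rightarrow> ('p,'c,'v) trm" where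
  "app_term \<sigma> (RC c) = Cst c"
| "app_term \<sigma> (RV v) = \<sigma> v"

definition app_atom :: "('v \<Rightarrow> ('p,'c,'v) trm) \<Rightarrow> ('p,'c,'v) ratom \<Rightarrow> ('p,'c,'v) atom" where
  "app_atom \<sigma> a = (fst a, map (app_term \<sigma>) (snd a))"

definition body_img :: "('p,'c,'v) trigger \<Rightarrow> ('p,'c,'v) atom set" where
  "body_img t = app_atom (\<lambda>v. the (snd t v)) ` fst (fst t)"

definition pi_s :: "('p,'c,'v) rule \<Rightarrow> ('v \<Rightarrow> ('p,'c,'v) trm option) \<Rightarrow> 'v \<Rightarrow> ('p,'c,'v) trm" where
  "pi_s R \<pi> v = (case \<pi> v of Some t \<Rightarrow> t | None \<Rightarrow> Null R v \<pi>)"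

definition trig_output :: "('p,'c,'v) trigger \<Rightarrow> ('p,'c,'v) atom set" where
  "trig_output t = app_atom (pi_s (fst t) (snd t)) ` snd (fst t)"

(* A (finite) derivation D_0, D_1, ..., D_n is represented by the list of its
   triggers [(R_1,pi_1), ..., (R_n,pi_n)];  the prefix D_0..D_i is  take i ds.
   fb F ds is the last factbase of the derivation ds. *)
definition fb :: "('p,'c,'v) ratom set \<Rightarrow> ('p,'c,'v) trigger list \<Rightarrow> ('p,'c,'v) atom set" where
  "fb F ds = emb_atom ` F \<union> (\<Union>t\<in>set ds. trig_output t)"

definition hom_trigger :: "('p,'c,'v) atom set \<Rightarrow> ('p,'c,'v) trigger \<Rightarrow> bool" where
  "hom_trigger G t \<longleftrightarrow> dom (snd t) = rvars (fst (fst t)) \<and> body_img t \<subseteq> G"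

definition applicable :: "chase_variant \<Rightarrow> ('p,'c,'v) ratom set \<Rightarrow> ('p,'c,'v) rule set
    \<Rightarrow> ('p,'c,'v) trigger list \<Rightarrow> ('p,'c,'v) trigger \<Rightarrow> bool" where
  "applicable X F Rs ds t \<longleftrightarrow>
     fst t \<in> Rs \<and> hom_trigger (fb F ds) t \<and> t \<notin> set ds \<and>
     (X = SO \<longrightarrow> \<not> (\<exists>\<pi>'. (fst t, \<pi>') \<in> set ds \<and> (\<forall>v\<in>frontier (fst t). \<pi>' v = snd t v)))"

definition chase_derivation :: "chase_variant \<Rightarrow> ('p,'c,'v) ratom set \<Rightarrow> ('p,'c,'v) rule set
    \<Rightarrow> ('p,'c,'v) trigger list \<Rightarrow> bool" where
  "chase_derivation X F Rs ds \<longleftrightarrow> (\<forall>i<length ds. applicable X F Rs (take i ds) (ds ! i))"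

primrec arank_r :: "('p,'c,'v) ratom set \<Rightarrow> ('p,'c,'v) trigger list \<Rightarrow> ('p,'c,'v) atom \<Rightarrow> nat" where
  "arank_r F [] = (\<lambda>A. 0)"
| "arank_r F (t # rds) = (\<lambda>A. if A \<in> fb F rds then arank_r F rds A
        else if A \<in> trig_output t then Suc (Max (insert 0 (arank_r F rds ` body_img t))) else 0)"

definition arank :: "('p,'c,'v) ratom set \<Rightarrow> ('p,'c,'v) trigger list \<Rightarrow> ('p,'c,'v) atom \<Rightarrow> nat" where
  "arank F ds = arank_r F (rev ds)"

definition trank :: "('p,'c,'v) ratom set \<Rightarrow> ('p,'c,'v) trigger list \<Rightarrow> ('p,'c,'v) trigger \<Rightarrow> nat" where
  "trank F ds t = Suc (Max (insert 0 (arank F ds ` body_img t)))"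

definition depth :: "('p,'c,'v) ratom set \<Rightarrow> ('p,'c,'v) trigger list \<Rightarrow> nat" where
  "depth F ds = Max (insert 0 (arank F ds ` fb F ds))"

definition breadth_first :: "chase_variant \<Rightarrow> ('p,'c,'v) ratom set \<Rightarrow> ('p,'c,'v) rule set
    \<Rightarrow> ('p,'c,'v) trigger list \<Rightarrow> bool" where
  "breadth_first X F Rs ds \<longleftrightarrow>
     (\<forall>i j. i \<le> j \<and> j < length ds \<longrightarrow>
        trank F (take i ds) (ds ! i) \<le> trank F (take j ds) (ds ! j)) \<and>
     (\<forall>i<length ds.
        (\<forall>j. i < j \<and> j < length ds \<longrightarrow> trank F (take j ds) (ds ! j) \<noteq> trank F (take i ds) (ds ! i))
        \<longrightarrow> (\<forall>t. applicable X F Rs (take (Suc i) ds) t \<longrightarrow>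
               trank F (take (Suc i) ds) t = Suc (trank F (take i ds) (ds ! i))))"

definition exhaustive :: "chase_variant \<Rightarrow> ('p,'c,'v) ratom set \<Rightarrow> ('p,'c,'v) rule set
    \<Rightarrow> ('p,'c,'v) trigger list \<Rightarrow> bool" where
  "exhaustive X F Rs ds \<longleftrightarrow>
     (\<forall>i\<le>length ds. \<forall>t. applicable X F Rs (take i ds) t \<longrightarrow>
        (\<exists>k. i \<le> k \<and> k < length ds \<and> ds ! k = t) \<or>
        (\<exists>k. i \<le> k \<and> k \<le> length ds \<and> \<not> applicable X F Rs (take k ds) t))"

(* terminating = exhaustive and finite; derivations are lists, hence finite *)
definition terminating :: "chase_variant \<Rightarrow> ('p,'c,'v) ratom set \<Rightarrow> ('p,'c,'v) rule set
    \<Rightarrow> ('p,'c,'v) trigger list \<Rightarrow> bool" where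
  "terminating X F Rs ds \<longleftrightarrow> chase_derivation X F Rs ds \<and> exhaustive X F Rs ds"

end

theory Submission
  imports Defs
begin

definition same :: "chase_variant \<Rightarrow> ('p,'c,'v) trigger \<Rightarrow> ('p,'c,'v) trigger \<Rightarrow> bool" where
  "same X t1 t2 \<longleftrightarrow> fst t1 = fst t2 \<and>
     (if X = SO then (\<forall>v\<in>frontier (fst t1). snd t1 v = snd t2 v) else snd t1 = snd t2)"

definition terms_of :: "('p,'c,'v) atom set \<Rightarrow> ('p,'c,'v) trm set" where
  "terms_of G = {s. \<exists>a\<in>G. s \<in> set (snd a)}"

definition map_atom :: "(('p,'c,'v) trm \<Rightarrow> ('p,'c,'v) trm) \<Rightarrow> ('p,'c,'v) atom \<Rightarrow> ('p,'c,'v) atom" where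
  "map_atom h a = (fst a, map h (snd a))"

definition ht :: "(('p,'c,'v) trm \<Rightarrow> ('p,'c,'v) trm) \<Rightarrow> ('p,'c,'v) trigger \<Rightarrow> ('p,'c,'v) trigger" where
  "ht h t = (fst t, \<lambda>v. map_option h (snd t v))"

definition hf :: "(('p,'c,'v) trigger \<Rightarrow> ('p,'c,'v) trigger) \<Rightarrow> ('p,'c,'v) trm \<Rightarrow> ('p,'c,'v) trm" where
  "hf f s = (case s of Cst c \<Rightarrow> Cst c | Var v \<Rightarrow> Var v | Null R v \<pi> \<Rightarrow> Null R v (snd (f (R,\<pi>))))"

lemma hf_simps[simp]: "hf f (Cst c) = Cst c" "hf f (Var v) = Var v"
  "hf f (Null R v \<pi>) = Null R v (snd (f (R,\<pi>)))"
  by (simp_all add: hf_def)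

lemma hf_Cst_iff[simp]: "hf f s = Cst c \<longleftrightarrow> s = Cst c"
  by (cases s) auto

lemma same_refl[simp]: "same X t t" by (auto simp: same_def)
lemma same_sym: "same X t1 t2 \<Longrightarrow> same X t2 t1" by (auto simp: same_def split: if_splits)
lemma same_trans: "same X t1 t2 \<Longrightarrow> same X t2 t3 \<Longrightarrow> same X t1 t3"
  by (auto simp: same_def split: if_splits)
lemma same_ht: "same X t1 t2 \<Longrightarrow> same X (ht h t1) (ht h t2)"
  by (auto simp: same_def ht_def split: if_splits)

lemma applicable_same:
  "applicable X F Rs P t \<longleftrightarrow> fst t \<in> Rs \<and> hom_trigger (fb F P) t \<and> \<not> (\<exists>t'\<in>set P. same X t' t)"
proof (cases "X = SO")
  case True
  have "(\<exists>t'\<in>set P. same X t' t) \<longleftrightarrow>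
     (\<exists>\<pi>'. (fst t, \<pi>') \<in> set P \<and> (\<forall>v\<in>frontier (fst t). \<pi>' v = snd t v))"
  proof
    assume "\<exists>t'\<in>set P. same X t' t"
    then obtain t' where "t' \<in> set P" "same X t' t" by blast
    then show "\<exists>\<pi>'. (fst t, \<pi>') \<in> set P \<and> (\<forall>v\<in>frontier (fst t). \<pi>' v = snd t v)"
      using True unfolding same_def by (intro exI[of _ "snd t'"]) (metis prod.collapse)
  next
    assume "\<exists>\<pi>'. (fst t, \<pi>') \<in> set P \<and> (\<forall>v\<in>frontier (fst t). \<pi>' v = snd t v)"
    then obtain \<pi>' where "(fst t, \<pi>') \<in> set P" "\<forall>v\<in>frontier (fst t). \<pi>' v = snd t v" by blast
    then show "\<exists>t'\<in>set P. same X t' t" using True unfolding same_def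
      by (intro bexI[of _ "(fst t, \<pi>')"]) auto
  qed
  moreover have "t \<in> set P \<Longrightarrow> \<exists>t'\<in>set P. same X t' t" using same_refl by blast
  ultimately show ?thesis unfolding applicable_def using True by blast
next
  case False
  have "(\<exists>t'\<in>set P. same X t' t) \<longleftrightarrow> t \<in> set P"
    using False unfolding same_def by (auto simp: prod_eq_iff)
  then show ?thesis unfolding applicable_def using False by (cases X) auto
qed

lemma fb_append: "fb F (P @ M) = fb F P \<union> (\<Union>t\<in>set M. trig_output t)"
  by (auto simp: fb_def)
lemma fb_snoc: "fb F (P @ [t]) = fb F P \<union> trig_output t"
  by (auto simp: fb_def)
lemma fb_mono: "fb F P \<subseteq> fb F (P @ M)"
  by (auto simp: fb_def)
lemma fb_Nil: "fb F [] = emb_atom ` F" by (simp add: fb_def)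

lemma fb_rev[simp]: "fb F (rev P) = fb F P" by (simp add: fb_def)

lemma arank_snoc: "arank F (P @ [t]) A = (if A \<in> fb F P then arank F P A
   else if A \<in> trig_output t then trank F P t else 0)"
  by (simp add: arank_def trank_def)

lemma arank_Nil: "arank F [] A = 0" by (simp add: arank_def)

lemma arank_stable: "A \<in> fb F P \<Longrightarrow> arank F (P @ M) A = arank F P A"
proof (induction M rule: rev_induct)
  case Nil then show ?case by simp
next
  case (snoc t M)
  have "A \<in> fb F (P @ M)" using snoc.prems fb_mono by blast
  then show ?case using snoc by (simp add: arank_snoc[of F "P @ M", simplified])
qed

lemma trank_stable: "body_img t \<subseteq> fb F P \<Longrightarrow> trank F (P @ M) t = trank F P t"
proof -
  assume a: "body_img t \<subseteq> fb F P"
  have "arank F (P @ M) ` body_img t = arank F P ` body_img t"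
    using a arank_stable by (metis (no_types, lifting) image_cong subsetD)
  then show ?thesis by (simp add: trank_def)
qed

lemma body_img_finite: "finite (fst (fst t)) \<Longrightarrow> finite (body_img t)"
  by (simp add: body_img_def)

lemma trank_le_iff: "finite (fst (fst t)) \<Longrightarrow>
   trank F P t \<le> Suc k \<longleftrightarrow> (\<forall>b\<in>body_img t. arank F P b \<le> k)"
  using body_img_finite[of t] by (simp add: trank_def)

lemma trank_gt: "finite (fst (fst t)) \<Longrightarrow> b \<in> body_img t \<Longrightarrow> arank F P b < trank F P t"
  using body_img_finite[of t] by (simp add: trank_def less_Suc_eq_le)

lemma trank_eq: "finite (fst (fst t)) \<Longrightarrow> (\<forall>b\<in>body_img t. arank F P b \<le> k) \<Longrightarrow>
   (k = 0 \<or> (\<exists>b\<in>body_img t. k \<le> arank F P b)) \<Longrightarrow> trank F P t = Suc k"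
proof -
  assume f: "finite (fst (fst t))" and le: "\<forall>b\<in>body_img t. arank F P b \<le> k"
    and ex: "k = 0 \<or> (\<exists>b\<in>body_img t. k \<le> arank F P b)"
  have "trank F P t \<le> Suc k" using trank_le_iff[OF f] le by blast
  moreover have "Suc k \<le> trank F P t"
  proof (cases "k = 0")
    case True then show ?thesis by (simp add: trank_def)
  next
    case False
    then obtain b where b: "b \<in> body_img t" "k \<le> arank F P b" using ex by blast
    show ?thesis using trank_gt[OF f b(1), of F P] b(2) by simp
  qed
  ultimately show ?thesis by simp
qed


lemma CD_append: "chase_derivation X F Rs (P @ M) \<longleftrightarrow> chase_derivation X F Rs P \<and>
   (\<forall>m<length M. applicable X F Rs (P @ take m M) (M ! m))"
proof
  assume a: "chase_derivation X F Rs (P @ M)"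
  have "chase_derivation X F Rs P" unfolding chase_derivation_def
  proof (intro allI impI)
    fix i assume "i < length P"
    then show "applicable X F Rs (take i P) (P ! i)" using a[unfolded chase_derivation_def, rule_format, of i]
      by (simp add: nth_append)
  qed
  moreover have "\<forall>m<length M. applicable X F Rs (P @ take m M) (M ! m)"
  proof (intro allI impI)
    fix m assume "m < length M"
    then show "applicable X F Rs (P @ take m M) (M ! m)"
      using a[unfolded chase_derivation_def, rule_format, of "length P + m"]
      by (simp add: nth_append)
  qed
  ultimately show "chase_derivation X F Rs P \<and> (\<forall>m<length M. applicable X F Rs (P @ take m M) (M ! m))" by blast
next
  assume a: "chase_derivation X F Rs P \<and> (\<forall>m<length M. applicable X F Rs (P @ take m M) (M ! m))"
  show "chase_derivation X F Rs (P @ M)" unfolding chase_derivation_def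
  proof (intro allI impI)
    fix i assume i: "i < length (P @ M)"
    show "applicable X F Rs (take i (P @ M)) ((P @ M) ! i)"
    proof (cases "i < length P")
      case True
      then show ?thesis using a unfolding chase_derivation_def by (simp add: nth_append)
    next
      case False
      then obtain m where m: "i = length P + m" "m < length M" using i
        by (metis add_diff_inverse_nat add_less_cancel_left length_append)
      then show ?thesis using a by (simp add: nth_append)
    qed
  qed
qed

lemma CD_snoc: "chase_derivation X F Rs (P @ [t]) \<longleftrightarrow> chase_derivation X F Rs P \<and> applicable X F Rs P t"
  using CD_append[of X F Rs P "[t]"] by simp

lemma CD_Nil[simp]: "chase_derivation X F Rs []" by (simp add: chase_derivation_def)

lemma CD_mem: assumes "chase_derivation X F Rs P" "w \<in> set P"
  shows "fst w \<in> Rs \<and> hom_trigger (fb F P) w"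
proof -
  obtain i where i: "i < length P" "P ! i = w" using assms(2) by (metis in_set_conv_nth)
  have "applicable X F Rs (take i P) w" using assms(1) i unfolding chase_derivation_def by blast
  moreover have "fb F (take i P) \<subseteq> fb F P" using fb_mono[of F "take i P" "drop i P"] by simp
  ultimately show ?thesis unfolding applicable_def hom_trigger_def by blast
qed

lemma CD_same_eq: assumes "chase_derivation X F Rs P" "w1 \<in> set P" "w2 \<in> set P" "same X w1 w2"
  shows "w1 = w2"
proof -
  obtain i where i: "i < length P" "P ! i = w1" using assms(2) by (metis in_set_conv_nth)
  obtain j where j: "j < length P" "P ! j = w2" using assms(3) by (metis in_set_conv_nth)
  have nb: "\<not> same X (P ! a) (P ! b)" if "a < b" "b < length P" for a b
  proof -
    have "applicable X F Rs (take b P) (P ! b)" using assms(1) that unfolding chase_derivation_def by blast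
    moreover have "P ! a \<in> set (take b P)" using that by (simp add: in_set_conv_nth) (metis nth_take)
    ultimately show ?thesis unfolding applicable_same by blast
  qed
  show ?thesis
  proof (cases i j rule: linorder_cases)
    case less then show ?thesis using nb[of i j] i j assms(4) by simp
  next
    case equal then show ?thesis using i j by simp
  next
    case greater then show ?thesis using nb[of j i] i j assms(4) same_sym by blast
  qed
qed

lemma CD_distinct: assumes "chase_derivation X F Rs P" shows "distinct P"
proof -
  have "\<And>i j. i < length P \<Longrightarrow> j < length P \<Longrightarrow> i < j \<Longrightarrow> P ! i \<noteq> P ! j"
  proof -
    fix i j assume ij: "i < length P" "j < length P" "i < j"
    have "applicable X F Rs (take j P) (P ! j)" using assms ij unfolding chase_derivation_def by blast
    moreover have "P ! i \<in> set (take j P)" using ij by (simp add: in_set_conv_nth) (metis nth_take)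
    ultimately show "P ! i \<noteq> P ! j" unfolding applicable_def by auto
  qed
  then show ?thesis by (metis distinct_conv_nth nat_neq_iff)
qed

lemma terms_of_Un[simp]: "terms_of (A \<union> B) = terms_of A \<union> terms_of B"
  by (auto simp: terms_of_def)
lemma terms_of_mono: "A \<subseteq> B \<Longrightarrow> terms_of A \<subseteq> terms_of B"
  by (auto simp: terms_of_def)
lemma terms_ofI: "a \<in> G \<Longrightarrow> s \<in> set (snd a) \<Longrightarrow> s \<in> terms_of G"
  by (auto simp: terms_of_def)

lemma emb_term_not_Null: "emb_term x \<noteq> Null R v \<pi>" by (cases x) auto

lemma terms_emb: "s \<in> terms_of (emb_atom ` F) \<Longrightarrow> (\<exists>c. s = Cst c) \<or> (\<exists>v. s = Var v)"
  apply (auto simp: terms_of_def emb_atom_def)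
  subgoal for a b x by (cases x) auto
  done

lemma vals_in_terms: assumes "dom (snd t) = rvars (fst (fst t))" "snd t v = Some s"
  shows "s \<in> terms_of (body_img t)"
proof -
  have "v \<in> rvars (fst (fst t))" using assms by blast
  then obtain \<beta> where b: "\<beta> \<in> fst (fst t)" "RV v \<in> set (snd \<beta>)" unfolding rvars_def by blast
  have "app_atom (\<lambda>v. the (snd t v)) \<beta> \<in> body_img t" using b(1) by (simp add: body_img_def)
  moreover have "s \<in> set (snd (app_atom (\<lambda>v. the (snd t v)) \<beta>))"
    using b(2) assms(2) by (force simp: app_atom_def)
  ultimately show ?thesis by (rule terms_ofI)
qed

lemma terms_output: "s \<in> terms_of (trig_output t) \<Longrightarrow>
   (\<exists>c. s = Cst c) \<or> (\<exists>v. snd t v = Some s) \<or> (\<exists>v. s = Null (fst t) v (snd t))"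
  apply (auto simp: terms_of_def trig_output_def app_atom_def)
  subgoal for a b x by (cases x) (auto simp: pi_s_def split: option.splits)
  done

lemma provenance: assumes "chase_derivation X F Rs P" "Null R v \<pi> \<in> terms_of (fb F P)"
  shows "(R, \<pi>) \<in> set P"
  using assms
proof (induction P arbitrary: R v \<pi> rule: rev_induct)
  case Nil then show ?case using terms_emb[of "Null R v \<pi>" F] by (simp add: fb_Nil)
next
  case (snoc t P)
  have cd: "chase_derivation X F Rs P" and ap: "applicable X F Rs P t" using snoc.prems(1) CD_snoc by blast+
  have "Null R v \<pi> \<in> terms_of (fb F P) \<or> Null R v \<pi> \<in> terms_of (trig_output t)"
    using snoc.prems(2) by (simp add: fb_snoc)
  then show ?case
  proof
    assume "Null R v \<pi> \<in> terms_of (fb F P)" then show ?thesis using snoc.IH cd by simp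
  next
    assume o: "Null R v \<pi> \<in> terms_of (trig_output t)"
    have hom: "dom (snd t) = rvars (fst (fst t))" "body_img t \<subseteq> fb F P"
      using ap unfolding applicable_def hom_trigger_def by blast+
    from terms_output[OF o] show ?thesis
    proof (elim disjE exE)
      fix w assume "snd t w = Some (Null R v \<pi>)"
      then have "Null R v \<pi> \<in> terms_of (fb F P)"
        using vals_in_terms[OF hom(1)] terms_of_mono[OF hom(2)] by blast
      then show ?thesis using snoc.IH cd by simp
    next
      fix w assume "Null R v \<pi> = Null (fst t) w (snd t)"
      then show ?thesis by auto
    qed simp
  qed
qed

lemma output_transfer:
  assumes "\<forall>c. h (Cst c) = Cst c" "fst w' = fst w"
    "dom (snd w) = rvars (fst (fst w))" "dom (snd w') = rvars (fst (fst w))"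
    "\<forall>v\<in>frontier (fst w). snd w' v = map_option h (snd w v)"
    "\<forall>v. h (Null (fst w) v (snd w)) = Null (fst w) v (snd w')"
  shows "trig_output w' = map_atom h ` trig_output w"
proof -
  have "app_atom (pi_s (fst w) (snd w')) a = map_atom h (app_atom (pi_s (fst w) (snd w)) a)"
    if a: "a \<in> snd (fst w)" for a
  proof -
    have "app_term (pi_s (fst w) (snd w')) x = h (app_term (pi_s (fst w) (snd w)) x)"
      if x: "x \<in> set (snd a)" for x
    proof (cases x)
      case (RC c) then show ?thesis using assms(1) by simp
    next
      case (RV v)
      then have vh: "v \<in> rvars (snd (fst w))" using a x unfolding rvars_def by blast
      show ?thesis
      proof (cases "v \<in> rvars (fst (fst w))")
        case True
        then have "v \<in> frontier (fst w)" using vh by (simp add: frontier_def)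
        moreover obtain s where "snd w v = Some s" using True assms(3) by blast
        ultimately show ?thesis using assms(5) RV by (simp add: pi_s_def)
      next
        case False
        then have "snd w v = None" "snd w' v = None" using assms(3,4) by blast+
        then show ?thesis using assms(6) RV by (simp add: pi_s_def)
      qed
    qed
    then show ?thesis by (simp add: app_atom_def map_atom_def)
  qed
  then show ?thesis unfolding trig_output_def using assms(2) by (simp add: image_image)
qed

lemma body_img_ht:
  assumes "\<forall>c. h (Cst c) = Cst c" "dom (snd t) = rvars (fst (fst t))"
  shows "body_img (ht h t) = map_atom h ` body_img t"
proof -
  have "app_atom (\<lambda>v. the (map_option h (snd t v))) a = map_atom h (app_atom (\<lambda>v. the (snd t v)) a)"
    if a: "a \<in> fst (fst t)" for a
  proof -
    have "app_term (\<lambda>v. the (map_option h (snd t v))) x = h (app_term (\<lambda>v. the (snd t v)) x)"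
      if x: "x \<in> set (snd a)" for x
    proof (cases x)
      case (RC c) then show ?thesis using assms(1) by simp
    next
      case (RV v)
      then have "v \<in> rvars (fst (fst t))" using a x unfolding rvars_def by blast
      then obtain s where "snd t v = Some s" using assms(2) by blast
      then show ?thesis using RV by simp
    qed
    then show ?thesis by (simp add: app_atom_def map_atom_def)
  qed
  then show ?thesis unfolding body_img_def ht_def by (simp add: image_image)
qed

lemma inj_hf: assumes "chase_derivation X F Rs P" "\<forall>w\<in>set P. fst (f w) = fst w" "inj_on f (set P)"
  shows "inj_on (hf f) (terms_of (fb F P))"
proof (rule inj_onI)
  fix s1 s2 assume s: "s1 \<in> terms_of (fb F P)" "s2 \<in> terms_of (fb F P)" "hf f s1 = hf f s2"
  show "s1 = s2"
  proof (cases s1)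
    case (Null R1 v1 \<pi>1)
    then obtain R2 v2 \<pi>2 where s2: "s2 = Null R2 v2 \<pi>2" using s(3) by (cases s2) auto
    have m: "(R1, \<pi>1) \<in> set P" "(R2, \<pi>2) \<in> set P" using provenance[OF assms(1)] s(1,2) Null s2 by blast+
    have e: "R1 = R2" "v1 = v2" "snd (f (R1, \<pi>1)) = snd (f (R2, \<pi>2))" using s(3) Null s2 by auto
    have "fst (f (R1, \<pi>1)) = fst (f (R2, \<pi>2))" using assms(2) m e by force
    then have "f (R1, \<pi>1) = f (R2, \<pi>2)" using e(3) by (simp add: prod_eq_iff)
    then have "(R1, \<pi>1) = (R2, \<pi>2)" using assms(3) m by (meson inj_onD)
    then show ?thesis using Null s2 e by simp
  qed (use s(3) in \<open>cases s2; auto\<close>)+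
qed

lemma same_unht:
  assumes "inj_on h T" "dom (snd t1) = rvars (fst (fst t1))" "dom (snd t2) = rvars (fst (fst t2))"
    "terms_of (body_img t1) \<subseteq> T" "terms_of (body_img t2) \<subseteq> T" "same X (ht h t1) (ht h t2)"
  shows "same X t1 t2"
proof -
  have f: "fst t1 = fst t2" using assms(6) by (simp add: same_def ht_def)
  have key: "snd t1 v = snd t2 v" if v: "v \<in> rvars (fst (fst t1))"
      and e: "map_option h (snd t1 v) = map_option h (snd t2 v)" for v
  proof -
    obtain s1 where s1: "snd t1 v = Some s1" using v assms(2) by blast
    obtain s2 where s2: "snd t2 v = Some s2" using v assms(3) f by (metis domD)
    have "s1 \<in> T" "s2 \<in> T" using vals_in_terms[OF assms(2) s1] vals_in_terms[OF assms(3) s2] assms(4,5) by blast+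
    moreover have "h s1 = h s2" using e s1 s2 by simp
    ultimately show ?thesis using assms(1) s1 s2 by (simp add: inj_on_eq_iff)
  qed
  show ?thesis
  proof (cases "X = SO")
    case True
    then show ?thesis using assms(6) f key unfolding same_def ht_def frontier_def by auto
  next
    case False
    have "snd t1 v = snd t2 v" for v
    proof (cases "v \<in> rvars (fst (fst t1))")
      case True
      then show ?thesis using key assms(6) False unfolding same_def ht_def by (auto dest: fun_cong[of _ _ v])
    next
      case False
      then show ?thesis using assms(2,3) f by (metis domIff)
    qed
    then show ?thesis using f False by (auto simp: same_def)
  qed
qed


definition rk :: "('p,'c,'v) ratom set \<Rightarrow> ('p,'c,'v) trigger list \<Rightarrow> nat \<Rightarrow> nat" where
  "rk F P j = trank F (take j P) (P ! j)"

definition bfp :: "chase_variant \<Rightarrow> ('p,'c,'v) ratom set \<Rightarrow> ('p,'c,'v) rule set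
    \<Rightarrow> ('p,'c,'v) trigger list \<Rightarrow> bool" where
  "bfp X F Rs P \<longleftrightarrow> (\<forall>i j. i \<le> j \<and> j < length P \<longrightarrow> rk F P i \<le> rk F P j) \<and>
    (\<forall>i. Suc i < length P \<longrightarrow> (\<forall>j. i < j \<and> j < length P \<longrightarrow> rk F P j \<noteq> rk F P i) \<longrightarrow>
       (\<forall>t. applicable X F Rs (take (Suc i) P) t \<longrightarrow> trank F (take (Suc i) P) t = Suc (rk F P i)))"

lemma rk_old: "j < length Q \<Longrightarrow> rk F (Q @ L) j = rk F Q j"
  by (simp add: rk_def nth_append)

lemma rk_new: "m < length L \<Longrightarrow> rk F (Q @ L) (length Q + m) = trank F (Q @ take m L) (L ! m)"
  by (simp add: rk_def nth_append)

lemma bfp_Nil: "bfp X F Rs []" by (simp add: bfp_def)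

lemma bfp_step:
  assumes b: "bfp X F Rs Q" and le: "\<forall>j<length Q. rk F Q j \<le> k"
    and last: "Q \<noteq> [] \<longrightarrow> rk F Q (length Q - 1) = k"
    and ap: "\<forall>t. applicable X F Rs Q t \<longrightarrow> trank F Q t = Suc k"
    and L: "L \<noteq> []" and new: "\<forall>m<length L. rk F (Q @ L) (length Q + m) = Suc k"
  shows "bfp X F Rs (Q @ L)"
proof -
  have newr: "rk F (Q @ L) j = Suc k" if "length Q \<le> j" "j < length (Q @ L)" for j
    using new[rule_format, of "j - length Q"] that by simp
  have oldr: "rk F (Q @ L) j = rk F Q j" if "j < length Q" for j using rk_old that by blast
  have p1: "rk F (Q @ L) i \<le> rk F (Q @ L) j" if "i \<le> j" "j < length (Q @ L)" for i j
  proof (cases "j < length Q")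
    case True then show ?thesis using b that oldr unfolding bfp_def by auto
  next
    case False
    then have "rk F (Q @ L) j = Suc k" using newr that by simp
    moreover have "rk F (Q @ L) i \<le> Suc k"
    proof (cases "i < length Q")
      case True then show ?thesis using oldr le by fastforce
    next
      case False then show ?thesis using newr that by simp
    qed
    ultimately show ?thesis by simp
  qed
  have p2: "trank F (take (Suc i) (Q @ L)) t = Suc (rk F (Q @ L) i)"
    if i: "Suc i < length (Q @ L)" and H: "\<forall>j. i < j \<and> j < length (Q @ L) \<longrightarrow> rk F (Q @ L) j \<noteq> rk F (Q @ L) i"
      and t: "applicable X F Rs (take (Suc i) (Q @ L)) t" for i t
  proof -
    consider "Suc i < length Q" | "Suc i = length Q" | "length Q \<le> i" by linarith
    then show ?thesis
    proof cases
      case 1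
      have "\<forall>j. i < j \<and> j < length Q \<longrightarrow> rk F Q j \<noteq> rk F Q i"
      proof (intro allI impI)
        fix j assume j: "i < j \<and> j < length Q"
        then show "rk F Q j \<noteq> rk F Q i" using H[rule_format, of j] oldr[of j] oldr[of i] 1 by simp
      qed
      moreover have "take (Suc i) (Q @ L) = take (Suc i) Q" using 1 by simp
      moreover note tk = this
      have "trank F (take (Suc i) Q) t = Suc (rk F Q i)"
        using b 1 t tk calculation unfolding bfp_def by (metis (no_types, lifting))
      then show ?thesis using tk oldr[of i] 1 by simp
    next
      case 2
      then have "take (Suc i) (Q @ L) = Q" by simp
      moreover have "i = length Q - 1" using 2 by simp
      then have "rk F (Q @ L) i = k" using 2 oldr[of i] last by auto
      ultimately have tq: "take (Suc i) (Q @ L) = Q" and rq: "rk F (Q @ L) i = k" by blast+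
      have "applicable X F Rs Q t" using t tq by metis
      then have "trank F Q t = Suc k" using ap by blast
      then show ?thesis using tq rq by metis
    next
      case 3
      then show ?thesis using H newr[of i] newr[of "Suc i"] i by simp
    qed
  qed
  show ?thesis unfolding bfp_def using p1 p2 by blast
qed

lemma bfp_final: assumes "bfp X F Rs P" "\<forall>t. \<not> applicable X F Rs P t"
  shows "breadth_first X F Rs P"
  unfolding breadth_first_def
proof (intro conjI allI impI)
  fix i j assume "i \<le> j \<and> j < length P"
  then show "trank F (take i P) (P ! i) \<le> trank F (take j P) (P ! j)"
    using assms(1) unfolding bfp_def rk_def by blast
next
  fix i t assume i: "i < length P"
    and H: "\<forall>j. i < j \<and> j < length P \<longrightarrow> trank F (take j P) (P ! j) \<noteq> trank F (take i P) (P ! i)"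
    and t: "applicable X F Rs (take (Suc i) P) t"
  show "trank F (take (Suc i) P) t = Suc (trank F (take i P) (P ! i))"
  proof (cases "Suc i < length P")
    case True then show ?thesis using assms(1) H t unfolding bfp_def rk_def by blast
  next
    case False
    then have "take (Suc i) P = P" using i by simp
    then show ?thesis using t assms(2) by simp
  qed
qed

lemma terminal_of_terminating: assumes "terminating X F Rs ds" shows "\<not> applicable X F Rs ds t"
proof
  assume a: "applicable X F Rs ds t"
  have "(\<exists>k. length ds \<le> k \<and> k < length ds \<and> ds ! k = t) \<or>
        (\<exists>k. length ds \<le> k \<and> k \<le> length ds \<and> \<not> applicable X F Rs (take k ds) t)"
    using assms unfolding terminating_def exhaustive_def using le_refl a by blast
  then show False
  proof
    assume "\<exists>k. length ds \<le> k \<and> k \<le> length ds \<and> \<not> applicable X F Rs (take k ds) t"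
    then obtain k where "k = length ds" "\<not> applicable X F Rs (take k ds) t" by force
    then show False using a by simp
  qed auto
qed

lemma terminating_of_terminal: assumes "chase_derivation X F Rs P" "\<forall>t. \<not> applicable X F Rs P t"
  shows "terminating X F Rs P"
  unfolding terminating_def exhaustive_def
proof (intro conjI assms(1) allI impI)
  fix i t assume "i \<le> length P" "applicable X F Rs (take i P) t"
  then show "(\<exists>k. i \<le> k \<and> k < length P \<and> P ! k = t) \<or>
        (\<exists>k. i \<le> k \<and> k \<le> length P \<and> \<not> applicable X F Rs (take k P) t)"
  proof (intro disjI2 exI[of _ "length P"] conjI)
    show "\<not> applicable X F Rs (take (length P) P) t" using assms(2) by (metis take_all_iff order_refl)
  qed (use \<open>i \<le> length P\<close> in simp_all)
qed

lemma stage_ranks: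
  assumes "\<forall>u\<in>set M. body_img u \<subseteq> fb F Q \<and> trank F Q u = Suc k"
  shows "\<forall>A\<in>fb F (Q @ M) - fb F Q. arank F (Q @ M) A = Suc k"
  using assms
proof (induction M rule: rev_induct)
  case Nil then show ?case by simp
next
  case (snoc u M)
  show ?case
  proof
    fix A assume A: "A \<in> fb F (Q @ M @ [u]) - fb F Q"
    have eq: "Q @ M @ [u] = (Q @ M) @ [u]" by simp
    show "arank F (Q @ M @ [u]) A = Suc k"
    proof (cases "A \<in> fb F (Q @ M)")
      case True
      then show ?thesis using snoc A unfolding eq arank_snoc by simp
    next
      case False
      then have "A \<in> trig_output u" using A unfolding eq fb_snoc by blast
      moreover have "trank F (Q @ M) u = Suc k" using snoc.prems trank_stable[of u F Q M] by simp
      ultimately show ?thesis using False unfolding eq arank_snoc by simp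
    qed
  qed
qed

lemma arank_0_or: "arank F P A = 0 \<or> (\<exists>j<length P. arank F P A = rk F P j)"
proof (induction P rule: rev_induct)
  case Nil then show ?case by (simp add: arank_Nil)
next
  case (snoc t P)
  show ?case
  proof (cases "A \<in> fb F P")
    case True
    then have e: "arank F (P @ [t]) A = arank F P A" by (simp add: arank_snoc)
    from snoc show ?thesis
    proof
      assume "arank F P A = 0" then show ?thesis using e by simp
    next
      assume "\<exists>j<length P. arank F P A = rk F P j"
      then obtain j where "j < length P" "arank F P A = rk F P j" by blast
      then show ?thesis using e rk_old[of j P F "[t]"] by (intro disjI2 exI[of _ j]) simp
    qed
  next
    case False
    have r: "rk F (P @ [t]) (length P) = trank F P t" by (simp add: rk_def)
    show ?thesis
    proof (cases "A \<in> trig_output t")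
      case True
      then have "arank F (P @ [t]) A = rk F (P @ [t]) (length P)" using False r by (simp add: arank_snoc)
      then show ?thesis by (intro disjI2 exI[of _ "length P"]) simp
    next
      case False2: False
      then show ?thesis using False by (simp add: arank_snoc)
    qed
  qed
qed

lemma arank_image_finite: "finite (arank F P ` S)"
proof -
  have "arank F P ` S \<subseteq> insert 0 (rk F P ` {..<length P})"
  proof
    fix x assume "x \<in> arank F P ` S"
    then obtain A where "x = arank F P A" by blast
    then show "x \<in> insert 0 (rk F P ` {..<length P})" using arank_0_or[of F P A] by auto
  qed
  then show ?thesis by (rule finite_subset) simp
qed

definition Inv where "Inv X F Rs ds Q Qp k f \<longleftrightarrow>
  chase_derivation X F Rs Q \<and> (\<exists>L. Q = Qp @ L) \<and>
  (\<forall>A\<in>fb F Q. arank F Q A \<le> k) \<and> (\<forall>A\<in>fb F Q - fb F Qp. k \<le> arank F Q A) \<and>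
  (0 < k \<longrightarrow> (\<forall>t. applicable X F Rs Qp t \<longrightarrow> \<not> applicable X F Rs Q t)) \<and>
  bfp X F Rs Q \<and> (\<forall>j<length Q. rk F Q j \<le> k) \<and> (Q \<noteq> [] \<longrightarrow> rk F Q (length Q - 1) = k) \<and>
  (\<forall>t. fst t \<in> Rs \<longrightarrow> hom_trigger (fb F Q) t \<longrightarrow> trank F Q t \<le> k \<longrightarrow>
      (\<exists>j<length Q. same X (Q ! j) t \<and> rk F Q j \<le> trank F Q t)) \<and>
  (\<forall>j<length Q. \<forall>a\<in>trig_output (Q ! j). arank F Q a \<le> rk F Q j) \<and>
  (\<forall>w\<in>set Q. f w \<in> set ds \<and> same X (f w) (ht (hf f) w)) \<and> inj_on f (set Q)"

lemma Inv_base: "Inv X F Rs ds [] [] 0 f"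
  by (simp add: Inv_def bfp_Nil arank_Nil trank_def)

lemma out_f: assumes "chase_derivation X F Rs ds" "chase_derivation X F Rs Q"
  "f w \<in> set ds" "same X (f w) (ht (hf f) w)" "w \<in> set Q"
  shows "trig_output (f w) = map_atom (hf f) ` trig_output w"
proof -
  have fe: "fst (f w) = fst w" using assms(4) by (simp add: same_def ht_def)
  have d1: "dom (snd w) = rvars (fst (fst w))" using CD_mem[OF assms(2,5)] by (simp add: hom_trigger_def)
  have d2: "dom (snd (f w)) = rvars (fst (fst w))" using CD_mem[OF assms(1,3)] fe by (simp add: hom_trigger_def)
  have fr: "\<forall>v\<in>frontier (fst w). snd (f w) v = map_option (hf f) (snd w v)"
    using assms(4) fe by (auto simp: same_def ht_def split: if_splits)
  have nu: "\<forall>v. hf f (Null (fst w) v (snd w)) = Null (fst w) v (snd (f w))" by simp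
  show ?thesis by (rule output_transfer) (use fe d1 d2 fr nu in auto)
qed

lemma K1: assumes "chase_derivation X F Rs ds" "chase_derivation X F Rs Q"
  "\<forall>w\<in>set Q. f w \<in> set ds \<and> same X (f w) (ht (hf f) w)"
  shows "map_atom (hf f) ` fb F Q \<subseteq> fb F ds"
proof
  fix x assume "x \<in> map_atom (hf f) ` fb F Q"
  then obtain a where a: "a \<in> fb F Q" "x = map_atom (hf f) a" by blast
  show "x \<in> fb F ds"
  proof (cases "a \<in> emb_atom ` F")
    case True
    then obtain b where b: "b \<in> F" "a = emb_atom b" by blast
    have he: "hf f (emb_term y) = emb_term y" for y by (cases y) simp_all
    have "map (hf f) (map emb_term (snd b)) = map emb_term (snd b)"
      by (simp add: he)
    then have "x = a" using a b by (simp add: map_atom_def emb_atom_def)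
    then show ?thesis using True by (simp add: fb_def)
  next
    case False
    then obtain w where w: "w \<in> set Q" "a \<in> trig_output w" using a(1) by (auto simp: fb_def)
    then have "x \<in> trig_output (f w)" using out_f[OF assms(1,2)] assms(3) a(2) by blast
    then show ?thesis using assms(3) w by (auto simp: fb_def)
  qed
qed

lemma ht_cong: "(\<And>v s. snd t v = Some s \<Longrightarrow> h1 s = h2 s) \<Longrightarrow> ht h1 t = ht h2 t"
  unfolding ht_def
proof -
  assume a: "\<And>v s. snd t v = Some s \<Longrightarrow> h1 s = h2 s"
  have "map_option h1 (snd t v) = map_option h2 (snd t v)" for v
    using a[of v] by (cases "snd t v") simp_all
  then show "(fst t, \<lambda>v. map_option h1 (snd t v)) = (fst t, \<lambda>v. map_option h2 (snd t v))" by simp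
qed


lemma dom_ht[simp]: "dom (snd (ht h t)) = dom (snd t)"
  by (auto simp: ht_def dom_def)

lemma fst_ht[simp]: "fst (ht h t) = fst t" by (simp add: ht_def)

lemma step:
  assumes exR: "\<forall>R\<in>Rs. existential_rule R" and cdds: "chase_derivation X F Rs ds"
    and termds: "\<forall>t. \<not> applicable X F Rs ds t"
    and inv: "Inv X F Rs ds Q Qp k f" and app0: "applicable X F Rs Q t0"
  shows "\<exists>Q' f'. Inv X F Rs ds Q' Q (Suc k) f' \<and> length Q < length Q'"
proof -
  have I1: "chase_derivation X F Rs Q" and I2: "\<exists>L. Q = Qp @ L"
   and I3: "\<forall>A\<in>fb F Q. arank F Q A \<le> k" and I4: "\<forall>A\<in>fb F Q - fb F Qp. k \<le> arank F Q A"
   and I5: "0 < k \<longrightarrow> (\<forall>t. applicable X F Rs Qp t \<longrightarrow> \<not> applicable X F Rs Q t)"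
   and I6: "bfp X F Rs Q" and I7: "\<forall>j<length Q. rk F Q j \<le> k"
   and I8: "Q \<noteq> [] \<longrightarrow> rk F Q (length Q - 1) = k"
   and I9: "\<forall>t. fst t \<in> Rs \<longrightarrow> hom_trigger (fb F Q) t \<longrightarrow> trank F Q t \<le> k \<longrightarrow>
      (\<exists>j<length Q. same X (Q ! j) t \<and> rk F Q j \<le> trank F Q t)"
   and I10: "\<forall>j<length Q. \<forall>a\<in>trig_output (Q ! j). arank F Q a \<le> rk F Q j"
   and I11: "\<forall>w\<in>set Q. f w \<in> set ds \<and> same X (f w) (ht (hf f) w)" and I12: "inj_on f (set Q)"
    by (insert inv[unfolded Inv_def], (elim conjE, assumption)+)
  define h where "h = hf f"
  define T where "T = terms_of (fb F Q)"
  have hC: "\<forall>c. h (Cst c) = Cst c" by (simp add: h_def)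
  have fstf: "\<forall>w\<in>set Q. fst (f w) = fst w"
  proof
    fix w assume "w \<in> set Q"
    then have "same X (f w) (ht (hf f) w)" using I11 by blast
    then show "fst (f w) = fst w" unfolding same_def by simp
  qed
  have injh: "inj_on h T" using inj_hf[OF I1 fstf I12] by (simp add: h_def T_def)
  have K1Q: "map_atom h ` fb F Q \<subseteq> fb F ds" using K1[OF cdds I1 I11] by (simp add: h_def)
  have fin: "finite (fst (fst t))" if "fst t \<in> Rs" for t using exR that by (simp add: existential_rule_def)
  define AP where "AP = {t. applicable X F Rs Q t}"
  have Ahom: "fst t \<in> Rs \<and> hom_trigger (fb F Q) t" if "t \<in> AP" for t
    using that unfolding AP_def applicable_def by blast
  have homQ: "hom_trigger (fb F Q) w" if "w \<in> set Q" for w using CD_mem[OF I1 that] by blast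
  have homterms: "terms_of (body_img t) \<subseteq> T" if "hom_trigger (fb F Q) t" for t
    using that terms_of_mono unfolding T_def hom_trigger_def by blast
  have Ksame: "same X t1 t2" if "hom_trigger (fb F Q) t1" "hom_trigger (fb F Q) t2"
     "same X (ht h t1) (ht h t2)" for t1 t2
    using same_unht[OF injh _ _ homterms[OF that(1)] homterms[OF that(2)] that(3)] that(1,2)
    unfolding hom_trigger_def by blast
  have exds: "\<exists>t''. t'' \<in> set ds \<and> same X t'' (ht h t)" if "t \<in> AP" for t
  proof -
    have r: "fst (ht h t) \<in> Rs" using Ahom[OF that] by simp
    have hm: "hom_trigger (fb F Q) t" using Ahom[OF that] by blast
    have d1: "dom (snd t) = rvars (fst (fst t))" using hm by (simp add: hom_trigger_def)
    have d2: "body_img t \<subseteq> fb F Q" using hm by (simp add: hom_trigger_def)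
    have "map_atom h ` body_img t \<subseteq> fb F ds" using image_mono[OF d2] K1Q by (rule subset_trans)
    then have "body_img (ht h t) \<subseteq> fb F ds" using body_img_ht[OF hC d1] by simp
    then have hd: "hom_trigger (fb F ds) (ht h t)"
      unfolding hom_trigger_def using d1 by simp
    have na: "\<not> applicable X F Rs ds (ht h t)" using termds by blast
    have "\<exists>t'\<in>set ds. same X t' (ht h t)"
    proof (rule ccontr)
      assume "\<not> (\<exists>t'\<in>set ds. same X t' (ht h t))"
      then have "applicable X F Rs ds (ht h t)" using r hd applicable_same by metis
      then show False using na by contradiction
    qed
    then show ?thesis by blast
  qed
  define G where "G t = (SOME t''. t'' \<in> set ds \<and> same X t'' (ht h t))" for t
  have G: "G t \<in> set ds \<and> same X (G t) (ht h t)" if "t \<in> AP" for t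
    using someI_ex[OF exds[OF that]] unfolding G_def by blast
  have Gsame: "G t1 = G t2" if "same X t1 t2" for t1 t2
  proof -
    have s1: "same X (ht h t1) (ht h t2)" and s2: "same X (ht h t2) (ht h t1)"
      using same_ht[OF that] same_ht[OF same_sym[OF that]] by blast+
    have "(\<lambda>t''. t'' \<in> set ds \<and> same X t'' (ht h t1)) = (\<lambda>t''. t'' \<in> set ds \<and> same X t'' (ht h t2))"
      by (intro ext) (meson s1 s2 same_trans)
    then show ?thesis unfolding G_def by simp
  qed
  define ch where "ch x = (SOME t. t \<in> AP \<and> G t = x)" for x
  define Reps where "Reps = ch ` G ` AP"
  have ch: "ch x \<in> AP \<and> G (ch x) = x" if "x \<in> G ` AP" for x
  proof -
    have "\<exists>t. t \<in> AP \<and> G t = x" using that by blast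
    then show ?thesis unfolding ch_def by (rule someI_ex)
  qed
  have RA: "Reps \<subseteq> AP" using ch unfolding Reps_def by blast
  have finR: "finite Reps"
  proof -
    have "G ` AP \<subseteq> set ds" using G by blast
    then have "finite (G ` AP)" using finite_subset by blast
    then show ?thesis unfolding Reps_def by simp
  qed
  have cover: "\<exists>r\<in>Reps. same X r t" if "t \<in> AP" for t
  proof -
    define r where "r = ch (G t)"
    have r: "r \<in> AP" "G r = G t" using ch[of "G t"] that unfolding r_def by blast+
    have "same X (G r) (ht h r)" using G[OF r(1)] by blast
    then have s1: "same X (ht h r) (G t)" using r(2) by (metis same_sym)
    have s2: "same X (G t) (ht h t)" using G[OF that] by blast
    have "same X (ht h r) (ht h t)" by (rule same_trans[OF s1 s2])
    moreover have "hom_trigger (fb F Q) r" using Ahom[OF r(1)] by blast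
    moreover have "hom_trigger (fb F Q) t" using Ahom[OF that] by blast
    ultimately have "same X r t" using Ksame by blast
    moreover have "r \<in> Reps" unfolding Reps_def r_def using that by blast
    ultimately show ?thesis by blast
  qed
  have pw: "r1 = r2" if "r1 \<in> Reps" "r2 \<in> Reps" "G r1 = G r2" for r1 r2
  proof -
    from that(1) obtain x1 where x1': "r1 = ch x1" "x1 \<in> G ` AP" unfolding Reps_def by (rule imageE)
    from that(2) obtain x2 where x2': "r2 = ch x2" "x2 \<in> G ` AP" unfolding Reps_def by (rule imageE)
    note x1 = x1'(2,1) and x2 = x2'(2,1)
    have e1: "G r1 = x1" using ch[OF x1(1)] x1(2) by blast
    have e2: "G r2 = x2" using ch[OF x2(1)] x2(2) by blast
    have "x1 = x2" using e1 e2 that(3) by argo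
    then show ?thesis using x1 x2 by simp
  qed
  have pws: "r1 = r2" if "r1 \<in> Reps" "r2 \<in> Reps" "same X r1 r2" for r1 r2
    using pw[OF that(1,2) Gsame[OF that(3)]] .
  obtain L where L: "set L = Reps" "distinct L" using finite_distinct_list[OF finR] by blast
  have RQ: "r \<notin> set Q" if "r \<in> Reps" for r
    using RA that unfolding AP_def applicable_def by blast
  have Lne: "L \<noteq> []" using cover[of t0] app0 L(1) unfolding AP_def by auto
  have S1: "trank F Q t = Suc k" if ap: "applicable X F Rs Q t" for t
  proof -
    have r: "fst t \<in> Rs" and hm: "hom_trigger (fb F Q) t" using ap unfolding applicable_def by blast+
    have bq: "body_img t \<subseteq> fb F Q" using hm unfolding hom_trigger_def by blast
    show ?thesis
    proof (rule trank_eq[OF fin[OF r]])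
      show "\<forall>b\<in>body_img t. arank F Q b \<le> k" using bq I3 by blast
      show "k = 0 \<or> (\<exists>b\<in>body_img t. k \<le> arank F Q b)"
      proof (cases "k = 0")
        case False
        have "\<not> body_img t \<subseteq> fb F Qp"
        proof
          assume sub: "body_img t \<subseteq> fb F Qp"
          obtain L0 where "Q = Qp @ L0" using I2 by blast
          then have "set Qp \<subseteq> set Q" by auto
          then have "applicable X F Rs Qp t" using ap sub unfolding applicable_same hom_trigger_def by blast
          then show False using I5 False ap by blast
        qed
        then obtain b where "b \<in> body_img t" "b \<notin> fb F Qp" by blast
        then show ?thesis using I4 bq by blast
      qed simp
    qed
  qed
  define Q' where "Q' = Q @ L"
  have LA: "u \<in> AP" if "u \<in> set L" for u using L RA that by blast
  have cdQ': "chase_derivation X F Rs Q'"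
    unfolding Q'_def CD_append
  proof (intro conjI I1 allI impI)
    fix m assume m: "m < length L"
    have u: "L ! m \<in> AP" using m LA nth_mem by blast
    then have ap: "applicable X F Rs Q (L ! m)" by (simp add: AP_def)
    show "applicable X F Rs (Q @ take m L) (L ! m)"
      unfolding applicable_same
    proof (intro conjI)
      show "fst (L ! m) \<in> Rs" using ap applicable_def by blast
      show "hom_trigger (fb F (Q @ take m L)) (L ! m)"
        using ap fb_mono unfolding applicable_def hom_trigger_def by blast
      show "\<not> (\<exists>t'\<in>set (Q @ take m L). same X t' (L ! m))"
      proof
        assume "\<exists>t'\<in>set (Q @ take m L). same X t' (L ! m)"
        then obtain t' where t': "t' \<in> set (Q @ take m L)" "same X t' (L ! m)" by blast
        show False
        proof (cases "t' \<in> set Q")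
          case True then show False using ap t' unfolding applicable_same by blast
        next
          case False
          then have "t' \<in> set (take m L)" using t' by simp
          then obtain m' where m': "m' < length (take m L)" "take m L ! m' = t'"
            by (metis in_set_conv_nth)
          then have m'': "m' < m" "L ! m' = t'" "m' < length L" by auto
          then have "t' \<in> Reps" using L(1) nth_mem by metis
          moreover have "L ! m \<in> Reps" using L(1) m nth_mem by metis
          ultimately have "t' = L ! m" using pws t'(2) by blast
          then have "m' = m" using m''(2,3) m L(2) nth_eq_iff_index_eq by metis
          then show False using m''(1) by simp
        qed
      qed
    qed
  qed
  have LQ: "\<forall>u\<in>set L. body_img u \<subseteq> fb F Q \<and> trank F Q u = Suc k"
  proof
    fix u assume "u \<in> set L"
    then have "applicable X F Rs Q u" using LA AP_def by blast
    then show "body_img u \<subseteq> fb F Q \<and> trank F Q u = Suc k"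
      using S1 unfolding applicable_def hom_trigger_def by blast
  qed
  have newA: "\<forall>a\<in>fb F Q' - fb F Q. arank F Q' a = Suc k" using stage_ranks[OF LQ] Q'_def by simp
  have oldA: "arank F Q' a = arank F Q a" if "a \<in> fb F Q" for a
    using arank_stable[OF that] Q'_def by simp
  have rkold: "rk F Q' j = rk F Q j" if "j < length Q" for j using rk_old[OF that] Q'_def by simp
  have rknew: "rk F Q' (length Q + m) = Suc k" if m: "m < length L" for m
  proof -
    have "L ! m \<in> set L" using m by simp
    then have "body_img (L ! m) \<subseteq> fb F Q" "trank F Q (L ! m) = Suc k" using LQ by blast+
    then show ?thesis using rk_new[OF m] trank_stable Q'_def by metis
  qed
  have fbQQ': "fb F Q \<subseteq> fb F Q'" using fb_mono Q'_def by blast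
  have setQ': "set Q' = set Q \<union> Reps" using L(1) Q'_def by simp
  have nthold: "Q' ! j = Q ! j" if "j < length Q" for j using that Q'_def by (simp add: nth_append)
  have nthnew: "Q' ! (length Q + m) = L ! m" for m using Q'_def by (simp add: nth_append)
  have lenQ': "length Q' = length Q + length L" using Q'_def by simp
  have splitj: "j < length Q \<or> (\<exists>m<length L. j = length Q + m)" if "j < length Q'" for j
    using that lenQ' by (metis add_diff_inverse_nat nat_add_left_cancel_less)
  define f' where "f' t = (if t \<in> Reps then G t else f t)" for t
  have hf_eq: "hf f' s = hf f s" if "s \<in> T" for s
  proof (cases s)
    case (Null R v \<pi>)
    then have "(R, \<pi>) \<in> set Q" using provenance[OF I1] that T_def by blast
    then have "(R, \<pi>) \<notin> Reps" using RQ by blast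
    then show ?thesis using Null by (simp add: f'_def)
  qed simp_all
  have htf: "ht (hf f') w = ht (hf f) w" if "hom_trigger (fb F Q) w" for w
  proof (rule ht_cong)
    fix v s assume "snd w v = Some s"
    then have "s \<in> T" using vals_in_terms[of w v s] homterms[OF that] that unfolding hom_trigger_def by blast
    then show "hf f' s = hf f s" by (rule hf_eq)
  qed
  have I11': "\<forall>w\<in>set Q'. f' w \<in> set ds \<and> same X (f' w) (ht (hf f') w)"
  proof
    fix w assume w: "w \<in> set Q'"
    show "f' w \<in> set ds \<and> same X (f' w) (ht (hf f') w)"
    proof (cases "w \<in> Reps")
      case True
      then have "f' w = G w" by (simp add: f'_def)
      moreover have "w \<in> AP" using True RA by blast
      ultimately show ?thesis using G htf Ahom h_def by metis
    next
      case False
      then have wq: "w \<in> set Q" using w setQ' by blast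
      then have "f' w = f w" using False by (simp add: f'_def)
      then show ?thesis using I11 wq htf[OF homQ[OF wq]] by metis
    qed
  qed
  have cross: False if "x \<in> set Q" "y \<in> Reps" "f x = G y" for x y
  proof -
    have "same X (f x) (ht h x)" using I11 that(1) h_def by blast
    moreover have "same X (G y) (ht h y)" using G RA that(2) by blast
    ultimately have "same X (ht h x) (ht h y)" using that(3) same_sym same_trans by metis
    then have "same X x y" using Ksame homQ[OF that(1)] Ahom RA that(2) by blast
    moreover have "applicable X F Rs Q y" using RA that(2) AP_def by blast
    ultimately show False using that(1) unfolding applicable_same by blast
  qed
  have I12': "inj_on f' (set Q')"
  proof (rule inj_onI)
    fix x y assume x: "x \<in> set Q'" and y: "y \<in> set Q'" and e: "f' x = f' y"
    show "x = y"
    proof (cases "x \<in> Reps")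
      case xR: True
      show ?thesis
      proof (cases "y \<in> Reps")
        case True then show ?thesis using xR e pw by (simp add: f'_def)
      next
        case False
        then have "y \<in> set Q" using y setQ' by blast
        then show ?thesis using cross[of y x] xR False e by (simp add: f'_def)
      qed
    next
      case xR: False
      then have xQ: "x \<in> set Q" using x setQ' by blast
      show ?thesis
      proof (cases "y \<in> Reps")
        case True then show ?thesis using cross[of x y] xR xQ e by (simp add: f'_def)
      next
        case False
        then have "y \<in> set Q" using y setQ' by blast
        then show ?thesis using I12 xQ xR False e by (simp add: f'_def inj_on_def)
      qed
    qed
  qed
  have I3': "\<forall>a\<in>fb F Q'. arank F Q' a \<le> Suc k"
  proof
    fix a assume a: "a \<in> fb F Q'"
    show "arank F Q' a \<le> Suc k"
    proof (cases "a \<in> fb F Q")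
      case True then show ?thesis using oldA I3 by fastforce
    next
      case False then show ?thesis using newA a by simp
    qed
  qed
  have I4': "\<forall>a\<in>fb F Q' - fb F Q. Suc k \<le> arank F Q' a" using newA by simp
  have I5': "0 < Suc k \<longrightarrow> (\<forall>t. applicable X F Rs Q t \<longrightarrow> \<not> applicable X F Rs Q' t)"
  proof (intro impI allI)
    fix t assume "applicable X F Rs Q t"
    then obtain r where "r \<in> Reps" "same X r t" using cover AP_def by blast
    then show "\<not> applicable X F Rs Q' t" using setQ' unfolding applicable_same by blast
  qed
  have I6': "bfp X F Rs Q'"
    unfolding Q'_def
  proof (rule bfp_step[OF I6 I7 I8 _ Lne])
    show "\<forall>t. applicable X F Rs Q t \<longrightarrow> trank F Q t = Suc k" using S1 by blast
    show "\<forall>m<length L. rk F (Q @ L) (length Q + m) = Suc k" using rknew Q'_def by blast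
  qed
  have I7': "\<forall>j<length Q'. rk F Q' j \<le> Suc k"
  proof (intro allI impI)
    fix j assume "j < length Q'"
    then show "rk F Q' j \<le> Suc k" using splitj rkold I7 rknew by fastforce
  qed
  have I8': "Q' \<noteq> [] \<longrightarrow> rk F Q' (length Q' - 1) = Suc k"
  proof -
    have e: "length Q' - 1 = length Q + (length L - 1)" and l: "length L - 1 < length L"
      using lenQ' Lne by (auto simp: neq_Nil_conv)
    show ?thesis by (intro impI) (subst e, rule rknew[OF l])
  qed
  have I9': "\<forall>t. fst t \<in> Rs \<longrightarrow> hom_trigger (fb F Q') t \<longrightarrow> trank F Q' t \<le> Suc k \<longrightarrow>
      (\<exists>j<length Q'. same X (Q' ! j) t \<and> rk F Q' j \<le> trank F Q' t)"
  proof (intro allI impI)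
    fix t assume r: "fst t \<in> Rs" and hm: "hom_trigger (fb F Q') t" and tle: "trank F Q' t \<le> Suc k"
    have bl: "\<forall>b\<in>body_img t. arank F Q' b \<le> k" using tle trank_le_iff[OF fin[OF r]] by blast
    have bq: "body_img t \<subseteq> fb F Q"
    proof
      fix b assume b: "b \<in> body_img t"
      then have "b \<in> fb F Q'" using hm unfolding hom_trigger_def by blast
      moreover have "arank F Q' b \<le> k" using bl b by blast
      ultimately show "b \<in> fb F Q" using newA by (metis DiffI Suc_n_not_le_n)
    qed
    have te: "trank F Q' t = trank F Q t" using trank_stable[OF bq] Q'_def by simp
    have hmQ: "hom_trigger (fb F Q) t" using hm bq unfolding hom_trigger_def by blast
    show "\<exists>j<length Q'. same X (Q' ! j) t \<and> rk F Q' j \<le> trank F Q' t"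
    proof (cases "trank F Q t \<le> k")
      case True
      then obtain j where j: "j < length Q" "same X (Q ! j) t" "rk F Q j \<le> trank F Q t"
        using I9 r hmQ by blast
      then show ?thesis using nthold rkold te lenQ' by (intro exI[of _ j]) simp
    next
      case False
      then have tS: "trank F Q' t = Suc k" using tle te by simp
      show ?thesis
      proof (cases "\<exists>w\<in>set Q. same X w t")
        case True
        then obtain j where j: "j < length Q" "same X (Q ! j) t" by (metis in_set_conv_nth)
        then show ?thesis using nthold rkold I7 tS lenQ' by (intro exI[of _ j]) fastforce
      next
        case False
        then have "applicable X F Rs Q t" using r hmQ unfolding applicable_same by blast
        then obtain r' where r': "r' \<in> Reps" "same X r' t" using cover AP_def by blast
        then obtain m where m: "m < length L" "L ! m = r'" using L(1) by (metis in_set_conv_nth)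
        show ?thesis using nthnew[of m] rknew[OF m(1)] tS m r' lenQ'
          by (intro exI[of _ "length Q + m"]) simp
      qed
    qed
  qed
  have I10': "\<forall>j<length Q'. \<forall>a\<in>trig_output (Q' ! j). arank F Q' a \<le> rk F Q' j"
  proof (intro allI impI ballI)
    fix j a assume j: "j < length Q'" and a: "a \<in> trig_output (Q' ! j)"
    from splitj[OF j] show "arank F Q' a \<le> rk F Q' j"
    proof
      assume jq: "j < length Q"
      then have "a \<in> fb F Q" using a nthold unfolding fb_def by (metis UN_I UnCI nth_mem)
      then show ?thesis using oldA I10 jq a nthold rkold by metis
    next
      assume "\<exists>m<length L. j = length Q + m"
      then obtain m where m: "m < length L" "j = length Q + m" by blast
      have "a \<in> fb F Q'" using a j unfolding fb_def by (metis UN_I UnCI nth_mem)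
      then show ?thesis using m rknew[OF m(1)] newA oldA I3 by (cases "a \<in> fb F Q") fastforce+
    qed
  qed
  have "Inv X F Rs ds Q' Q (Suc k) f'"
    unfolding Inv_def using cdQ' Q'_def I3' I4' I5' I6' I7' I8' I9' I10' I11' I12' by blast
  moreover have "length Q < length Q'" using lenQ' Lne by simp
  ultimately show ?thesis by blast
qed


lemma Inv_facts:
  assumes "Inv X F Rs ds Q Qp k f"
  shows "chase_derivation X F Rs Q" "\<forall>A\<in>fb F Q. arank F Q A \<le> k"
    "bfp X F Rs Q" "\<forall>j<length Q. rk F Q j \<le> k"
    "\<forall>t. fst t \<in> Rs \<longrightarrow> hom_trigger (fb F Q) t \<longrightarrow> trank F Q t \<le> k \<longrightarrow>
      (\<exists>j<length Q. same X (Q ! j) t \<and> rk F Q j \<le> trank F Q t)"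
    "\<forall>j<length Q. \<forall>a\<in>trig_output (Q ! j). arank F Q a \<le> rk F Q j"
    "\<forall>w\<in>set Q. f w \<in> set ds \<and> same X (f w) (ht (hf f) w)" "inj_on f (set Q)"
  by (insert assms[unfolded Inv_def], (elim conjE, assumption)+)

lemma len_bound: assumes "Inv X F Rs ds Q Qp k f" shows "length Q \<le> length ds"
proof -
  have d: "distinct Q" using CD_distinct Inv_facts(1)[OF assms] by blast
  have "f ` set Q \<subseteq> set ds" using Inv_facts(7)[OF assms] by blast
  then have "card (set Q) \<le> card (set ds)"
    using card_inj_on_le[OF Inv_facts(8)[OF assms]] by blast
  also have "\<dots> \<le> length ds" by (rule card_length)
  finally show ?thesis using distinct_card[OF d] by simp
qed

lemma iterate:
  assumes exR: "\<forall>R\<in>Rs. existential_rule R" and cdds: "chase_derivation X F Rs ds"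
    and termds: "\<forall>t. \<not> applicable X F Rs ds t"
  shows "\<exists>Q Qp k f. Inv X F Rs ds Q Qp k f \<and> (n \<le> length Q \<or> (\<forall>t. \<not> applicable X F Rs Q t))"
proof (induction n)
  case 0
  show ?case using Inv_base[of X F Rs ds] by blast
next
  case (Suc n)
  then obtain Q Qp k f where i: "Inv X F Rs ds Q Qp k f"
    and d: "n \<le> length Q \<or> (\<forall>t. \<not> applicable X F Rs Q t)" by blast
  show ?case
  proof (cases "\<forall>t. \<not> applicable X F Rs Q t")
    case True then show ?thesis using i by blast
  next
    case False
    then obtain t0 where t0: "applicable X F Rs Q t0" by blast
    obtain Q' f' where "Inv X F Rs ds Q' Q (Suc k) f'" "length Q < length Q'"
      using step[OF exR cdds termds i t0] by blast
    moreover have "n \<le> length Q" using d False by blast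
    ultimately show ?thesis by (metis Suc_le_eq le_less_trans)
  qed
qed

lemma map_atom_emb: "c \<in> emb_atom ` F \<Longrightarrow> map_atom (hf f) c = c"
proof -
  assume "c \<in> emb_atom ` F"
  then obtain b where b: "c = emb_atom b" by blast
  have he: "hf f (emb_term y) = emb_term y" for y by (cases y) simp_all
  show ?thesis using b by (simp add: map_atom_def emb_atom_def he)
qed

lemma depth_claim:
  assumes exR: "\<forall>R\<in>Rs. existential_rule R" and cdds: "chase_derivation X F Rs ds"
    and inv: "Inv X F Rs ds B Qp k f" and termB: "\<forall>t. \<not> applicable X F Rs B t"
  shows "i \<le> length ds \<Longrightarrow> \<forall>c\<in>fb F (take i ds). \<exists>a\<in>fb F B. map_atom (hf f) a = c \<and>
           arank F B a \<le> arank F (take i ds) c"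
proof (induction i)
  case 0
  show ?case
  proof
    fix c assume c: "c \<in> fb F (take 0 ds)"
    then have ce: "c \<in> emb_atom ` F" by (simp add: fb_Nil)
    have "c \<in> fb F B" using ce by (simp add: fb_def)
    moreover have "arank F B c = 0" using arank_stable[of c F "[]" B] ce by (simp add: fb_Nil arank_Nil)
    ultimately show "\<exists>a\<in>fb F B. map_atom (hf f) a = c \<and> arank F B a \<le> arank F (take 0 ds) c"
      using map_atom_emb[OF ce] by (intro bexI[of _ c]) simp_all
  qed
next
  case (Suc i)
  define h where "h = hf f"
  define TB where "TB = terms_of (fb F B)"
  have I1: "chase_derivation X F Rs B" using Inv_facts(1)[OF inv] .
  have I3: "\<forall>A\<in>fb F B. arank F B A \<le> k" using Inv_facts(2)[OF inv] .
  have I7: "\<forall>j<length B. rk F B j \<le> k" using Inv_facts(4)[OF inv] .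
  have I9: "\<forall>t. fst t \<in> Rs \<longrightarrow> hom_trigger (fb F B) t \<longrightarrow> trank F B t \<le> k \<longrightarrow>
      (\<exists>j<length B. same X (B ! j) t \<and> rk F B j \<le> trank F B t)" using Inv_facts(5)[OF inv] .
  have I10: "\<forall>j<length B. \<forall>a\<in>trig_output (B ! j). arank F B a \<le> rk F B j" using Inv_facts(6)[OF inv] .
  have I11: "\<forall>w\<in>set B. f w \<in> set ds \<and> same X (f w) (ht (hf f) w)" using Inv_facts(7)[OF inv] .
  have I12: "inj_on f (set B)" using Inv_facts(8)[OF inv] .
  have fin: "finite (fst (fst t))" if "fst t \<in> Rs" for t using exR that by (simp add: existential_rule_def)
  have fstf: "\<forall>w\<in>set B. fst (f w) = fst w"
  proof
    fix w assume "w \<in> set B"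
    then have "same X (f w) (ht (hf f) w)" using I11 by blast
    then show "fst (f w) = fst w" unfolding same_def by simp
  qed
  have injh: "inj_on h TB" using inj_hf[OF I1 fstf I12] by (simp add: h_def TB_def)
  have P9: "\<exists>j<length B. same X (B ! j) t \<and> rk F B j \<le> trank F B t"
    if r: "fst t \<in> Rs" and hm: "hom_trigger (fb F B) t" for t
  proof (cases "trank F B t \<le> k")
    case True then show ?thesis using I9 r hm by blast
  next
    case False
    have na: "\<not> applicable X F Rs B t" using termB by blast
    then have "\<exists>w\<in>set B. same X w t" using r hm applicable_same by metis
    then obtain j where j: "j < length B" "same X (B ! j) t" by (metis in_set_conv_nth)
    then show ?thesis using I7 False by (intro exI[of _ j]) fastforce
  qed
  have il: "i < length ds" using Suc.prems by simp
  have IH: "\<forall>c\<in>fb F (take i ds). \<exists>a\<in>fb F B. map_atom h a = c \<and> arank F B a \<le> arank F (take i ds) c"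
    using Suc.IH Suc.prems h_def by simp
  define ti where "ti = ds ! i"
  have tk: "take (Suc i) ds = take i ds @ [ti]" using il ti_def by (simp add: take_Suc_conv_app_nth)
  have api: "applicable X F Rs (take i ds) ti" using cdds il ti_def unfolding chase_derivation_def by blast
  have ri: "fst ti \<in> Rs" and di: "dom (snd ti) = rvars (fst (fst ti))" and bi: "body_img ti \<subseteq> fb F (take i ds)"
    using api unfolding applicable_def hom_trigger_def by blast+
  show ?case
  proof
    fix c assume c: "c \<in> fb F (take (Suc i) ds)"
    show "\<exists>a\<in>fb F B. map_atom (hf f) a = c \<and> arank F B a \<le> arank F (take (Suc i) ds) c"
    proof (cases "c \<in> fb F (take i ds)")
      case True
      then have "arank F (take (Suc i) ds) c = arank F (take i ds) c" unfolding tk by (simp add: arank_snoc)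
      then show ?thesis using IH True h_def by metis
    next
      case False
      then have co: "c \<in> trig_output ti" using c unfolding tk fb_snoc by blast
      have crank: "arank F (take (Suc i) ds) c = trank F (take i ds) ti"
        unfolding tk using False co by (simp add: arank_snoc)
      obtain p where p: "\<forall>b\<in>fb F (take i ds). p b \<in> fb F B \<and> map_atom h (p b) = b \<and>
           arank F B (p b) \<le> arank F (take i ds) b"
        using IH by metis
      have vals: "s \<in> h ` TB" if "snd ti v = Some s" for v s
      proof -
        have "s \<in> terms_of (body_img ti)" using vals_in_terms[OF di that] .
        then obtain b where b: "b \<in> body_img ti" "s \<in> set (snd b)" unfolding terms_of_def by blast
        have pb: "p b \<in> fb F B" "map_atom h (p b) = b" using p b(1) bi by blast+
        then have "s \<in> set (map h (snd (p b)))" using b(2) by (metis map_atom_def snd_conv)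
        then obtain y where "y \<in> set (snd (p b))" "s = h y" by auto
        moreover have "y \<in> TB" using pb(1) calculation(1) unfolding TB_def terms_of_def by blast
        ultimately show ?thesis by blast
      qed
      define \<pi>' where "\<pi>' v = map_option (inv_into TB h) (snd ti v)" for v
      define t' where "t' = (fst ti, \<pi>')"
      have htt: "ht h t' = ti"
      proof -
        have "map_option h (\<pi>' v) = snd ti v" for v
        proof (cases "snd ti v")
          case (Some s)
          then show ?thesis using vals[OF Some] by (simp add: \<pi>'_def f_inv_into_f)
        qed (simp add: \<pi>'_def)
        then show ?thesis by (simp add: ht_def t'_def)
      qed
      have dt': "dom (snd t') = rvars (fst (fst t'))" using di by (simp add: t'_def \<pi>'_def dom_def)
      have bodyeq: "app_atom (\<lambda>v. the (\<pi>' v)) \<beta> = p (app_atom (\<lambda>v. the (snd ti v)) \<beta>)"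
        if \<beta>: "\<beta> \<in> fst (fst ti)" for \<beta>
      proof -
        define b where "b = app_atom (\<lambda>v. the (snd ti v)) \<beta>"
        have bb: "b \<in> body_img ti" using \<beta> by (simp add: b_def body_img_def)
        then have pb: "p b \<in> fb F B" "map_atom h (p b) = b" using p bi by blast+
        have sb: "snd b = map (app_term (\<lambda>v. the (snd ti v))) (snd \<beta>)" by (simp add: b_def app_atom_def)
        have hs: "map h (snd (p b)) = snd b" using pb(2) by (metis map_atom_def snd_conv)
        have fs: "fst (p b) = fst b" using pb(2) by (metis map_atom_def fst_conv)
        have len: "length (snd (p b)) = length (snd \<beta>)" using hs sb by (metis length_map)
        have "map (app_term (\<lambda>v. the (\<pi>' v))) (snd \<beta>) = snd (p b)"
        proof (rule nth_equalityI)
          show "length (map (app_term (\<lambda>v. the (\<pi>' v))) (snd \<beta>)) = length (snd (p b))" using len by simp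
        next
          fix q assume q: "q < length (map (app_term (\<lambda>v. the (\<pi>' v))) (snd \<beta>))"
          then have q': "q < length (snd \<beta>)" by simp
          have hq: "h (snd (p b) ! q) = app_term (\<lambda>v. the (snd ti v)) (snd \<beta> ! q)"
            using hs sb q' len by (metis nth_map)
          have yT: "snd (p b) ! q \<in> TB" using pb(1) q' len unfolding TB_def terms_of_def
            by (metis (mono_tags, lifting) mem_Collect_eq nth_mem)
          show "map (app_term (\<lambda>v. the (\<pi>' v))) (snd \<beta>) ! q = snd (p b) ! q"
          proof (cases "snd \<beta> ! q")
            case (RC cc)
            then have "h (snd (p b) ! q) = Cst cc" using hq by simp
            then have "snd (p b) ! q = Cst cc" unfolding h_def by simp
            then show ?thesis using RC q' by simp
          next
            case (RV v)
            have "RV v \<in> set (snd \<beta>)" using q' RV[symmetric] nth_mem by metis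
            then have "v \<in> rvars (fst (fst ti))" using \<beta> unfolding rvars_def by blast
            then have "v \<in> dom (snd ti)" using di by simp
            then obtain s where s: "snd ti v = Some s" by blast
            have "h (snd (p b) ! q) = s" using hq RV s by simp
            then have "inv_into TB h s = snd (p b) ! q" using inv_into_f_f[OF injh yT] by simp
            then show ?thesis using RV q' s by (simp add: \<pi>'_def)
          qed
        qed
        then show ?thesis using fs by (simp add: app_atom_def b_def prod_eq_iff)
      qed
      have bt': "body_img t' = p ` body_img ti"
        unfolding body_img_def t'_def using bodyeq by (auto simp: image_image)
      have bt'B: "body_img t' \<subseteq> fb F B"
      proof
        fix x assume "x \<in> body_img t'"
        then obtain b where b: "b \<in> body_img ti" "x = p b" using bt' by blast
        then have "b \<in> fb F (take i ds)" using bi by blast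
        then show "x \<in> fb F B" using p b(2) by blast
      qed
      have hmt': "hom_trigger (fb F B) t'" using dt' bt'B by (simp add: hom_trigger_def)
      have rt': "fst t' \<in> Rs" using ri by (simp add: t'_def)
      obtain j where j: "j < length B" "same X (B ! j) t'" "rk F B j \<le> trank F B t'"
        using P9[OF rt' hmt'] by blast
      have tle: "trank F B t' \<le> trank F (take i ds) ti"
      proof -
        define M where "M = Max (insert 0 (arank F (take i ds) ` body_img ti))"
        have finb: "finite (body_img ti)" using body_img_finite fin[OF ri] by blast
        have "\<forall>x\<in>body_img t'. arank F B x \<le> M"
        proof
          fix x assume "x \<in> body_img t'"
          then obtain b where b: "b \<in> body_img ti" "x = p b" using bt' by blast
          have "arank F B x \<le> arank F (take i ds) b" using p b bi by blast
          also have "\<dots> \<le> M" unfolding M_def using finb b(1) by (intro Max_ge) auto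
          finally show "arank F B x \<le> M" .
        qed
        then have "trank F B t' \<le> Suc M" using trank_le_iff[of t'] fin[OF rt'] by blast
        then show ?thesis by (simp add: trank_def M_def)
      qed
      define w where "w = B ! j"
      have wB: "w \<in> set B" using j(1) w_def by simp
      have fw: "f w \<in> set ds" "same X (f w) (ht h w)" using I11 wB h_def by blast+
      have "same X (ht h w) (ht h t')" using same_ht j(2) w_def by blast
      then have "same X (ht h w) ti" using htt by simp
      then have "same X (f w) ti" using fw(2) same_trans by blast
      then have fwt: "f w = ti" using CD_same_eq[OF cdds fw(1)] il ti_def by simp
      have "trig_output (f w) = map_atom h ` trig_output w"
        using out_f[OF cdds I1] I11 wB h_def by blast
      then obtain a where a: "a \<in> trig_output w" "c = map_atom h a" using co fwt by auto
      have aB: "a \<in> fb F B" using a(1) wB unfolding fb_def by blast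
      have "arank F B a \<le> rk F B j" using I10 j(1) a(1) w_def by blast
      also have "\<dots> \<le> trank F (take i ds) ti" using j(3) tle by simp
      finally show ?thesis using aB a(2) crank h_def by metis
    qed
  qed
qed

theorem proposition1:
  fixes F :: "('p,'c,'v) ratom set" and Rs :: "('p,'c,'v) rule set"
    and X :: chase_variant and ds :: "('p,'c,'v) trigger list"
  assumes "\<forall>R\<in>Rs. existential_rule R"
    and "terminating X F Rs ds"
  shows "\<exists>ds'. terminating X F Rs ds' \<and> breadth_first X F Rs ds' \<and> depth F ds' \<le> depth F ds"
proof -
  have cdds: "chase_derivation X F Rs ds" using assms(2) by (simp add: terminating_def)
  have termds: "\<forall>t. \<not> applicable X F Rs ds t" using terminal_of_terminating[OF assms(2)] by blast
  obtain B Qp k f where inv: "Inv X F Rs ds B Qp k f"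
    and d: "Suc (length ds) \<le> length B \<or> (\<forall>t. \<not> applicable X F Rs B t)"
    using iterate[OF assms(1) cdds termds, of "Suc (length ds)"] by blast
  have "\<not> Suc (length ds) \<le> length B" using len_bound[OF inv] by linarith
  then have termB: "\<forall>t. \<not> applicable X F Rs B t" using d by blast
  have I1: "chase_derivation X F Rs B" using Inv_facts(1)[OF inv] .
  have t1: "terminating X F Rs B" using terminating_of_terminal[OF I1 termB] .
  have t2: "breadth_first X F Rs B" using bfp_final[OF Inv_facts(3)[OF inv] termB] .
  define h where "h = hf f"
  define TB where "TB = terms_of (fb F B)"
  have fstf: "\<forall>w\<in>set B. fst (f w) = fst w"
  proof
    fix w assume "w \<in> set B"
    then have "same X (f w) (ht (hf f) w)" using Inv_facts(7)[OF inv] by blast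
    then show "fst (f w) = fst w" unfolding same_def by simp
  qed
  have injh: "inj_on h TB" using inj_hf[OF I1 fstf Inv_facts(8)[OF inv]] by (simp add: h_def TB_def)
  have K1B: "map_atom h ` fb F B \<subseteq> fb F ds" using K1[OF cdds I1 Inv_facts(7)[OF inv]] by (simp add: h_def)
  have claim: "\<forall>c\<in>fb F ds. \<exists>a\<in>fb F B. map_atom h a = c \<and> arank F B a \<le> arank F ds c"
    using depth_claim[OF assms(1) cdds inv termB, of "length ds"] h_def by simp
  have findsd: "finite (insert 0 (arank F ds ` fb F ds))" using arank_image_finite by blast
  have "depth F B \<le> depth F ds"
    unfolding depth_def
  proof (rule Max.boundedI)
    show "finite (insert 0 (arank F B ` fb F B))" using arank_image_finite by blast
    show "insert 0 (arank F B ` fb F B) \<noteq> {}" by simp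
  next
    fix x assume "x \<in> insert 0 (arank F B ` fb F B)"
    then show "x \<le> Max (insert 0 (arank F ds ` fb F ds))"
    proof
      assume "x = 0" then show ?thesis by simp
    next
      assume "x \<in> arank F B ` fb F B"
      then obtain a where a: "a \<in> fb F B" "x = arank F B a" by blast
      have ha: "map_atom h a \<in> fb F ds" using K1B a(1) by blast
      then obtain a' where a': "a' \<in> fb F B" "map_atom h a' = map_atom h a"
        "arank F B a' \<le> arank F ds (map_atom h a)" using claim by blast
      have "map h (snd a') = map h (snd a)" using a'(2) by (simp add: map_atom_def)
      moreover have "set (snd a') \<union> set (snd a) \<subseteq> TB" using a(1) a'(1) unfolding TB_def terms_of_def by blast
      ultimately have "snd a' = snd a" using inj_on_map_eq_map[of h "snd a'" "snd a"] injh
        by (meson inj_on_subset)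
      moreover have "fst a' = fst a" using a'(2) by (simp add: map_atom_def)
      ultimately have "a' = a" by (simp add: prod_eq_iff)
      then have "x \<le> arank F ds (map_atom h a)" using a'(3) a(2) by simp
      also have "\<dots> \<le> Max (insert 0 (arank F ds ` fb F ds))" using findsd ha by (intro Max_ge) auto
      finally show ?thesis .
    qed
  qed
  then show ?thesis using t1 t2 by blast
qed

end
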